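(* For every prime power $q$ and integer $k\ge 2$, there is a strong blocking set in $\mathrm{PG}(k-1,q)$ of size at most \[(q+1)\frac{2k}{\log_q\left(\frac{q^4}{q^3-q+1}\right)}.\]
   Context: $\mathrm{PG}(k-1,q)$ is the projective space whose points, lines, ..., hyperplanes are the $1$-, $2$-, ..., $(k-1)$-dimensional vector subspaces of $\mathbb{F}_q^k$. A strong blocking set in $\mathrm{PG}(k-1,q)$ is a set $S$ of points such that for every hyperplane $H$, the points of $S\cap H$ span $H$. *)

theory Defs
  imports "HOL-Analysis.Finite_Cartesian_Product"
begin

text \<open>The projective space PG(k-1,q) is modelled via the vector space 'a^'n over a finite
field 'a (q = CARD('a)) with k = CARD('n).\<close>

definition fsubspace :: "('a::field ^ 'n) set \<Rightarrow> bool" where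
  "fsubspace V \<longleftrightarrow> module.subspace (vector_scalar_mult :: 'a \<Rightarrow> 'a^'n \<Rightarrow> 'a^'n) V"

definition fspan :: "('a::field ^ 'n) set \<Rightarrow> ('a ^ 'n) set" where
  "fspan X = module.span (vector_scalar_mult :: 'a \<Rightarrow> 'a^'n \<Rightarrow> 'a^'n) X"

definition fdim :: "('a::field ^ 'n) set \<Rightarrow> nat" where
  "fdim V = vector_space.dim (vector_scalar_mult :: 'a \<Rightarrow> 'a^'n \<Rightarrow> 'a^'n) V"

definition proj_points :: "('a::field ^ 'n) set set" where
  "proj_points = {P. fsubspace P \<and> fdim P = 1}"

definition proj_hyperplanes :: "('a::field ^ 'n::finite) set set" where
  "proj_hyperplanes = {H. fsubspace H \<and> fdim H = CARD('n) - 1}"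

definition strong_blocking_set :: "('a::field ^ 'n::finite) set set \<Rightarrow> bool" where
  "strong_blocking_set S \<longleftrightarrow> S \<subseteq> proj_points \<and>
     (\<forall>H \<in> proj_hyperplanes. fspan (\<Union>{P \<in> S. P \<subseteq> H}) = H)"

end

theory Submission
  imports Defs "HOL-Analysis.Cartesian_Space"
begin

definition D :: "'a::field^'n \<Rightarrow> 'a^'n \<Rightarrow> 'a" where
  "D f x = (\<Sum>i\<in>UNIV. f$i * x$i)"

lemma D_add: "D f (x + y) = D f x + D f y"
  by (simp add: D_def distrib_left sum.distrib)
lemma D_scale: "D f (c *s x) = c * D f x"
  by (simp add: D_def sum_distrib_left mult.left_commute)
lemma D_diff: "D f (x - y) = D f x - D f y"
  by (simp add: D_def right_diff_distrib sum_subtractf)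
lemma D_zero: "D f 0 = 0"
  by (simp add: D_def)
lemma D_left: "D (b *s g + c *s f) x = b * D g x + c * D f x"
  by (simp add: D_def sum_distrib_left sum.distrib distrib_right mult.assoc)

lemma D_span0:
  assumes "x \<in> vec.span A" "\<And>a. a \<in> A \<Longrightarrow> D f a = 0"
  shows "D f x = 0"
  using assms(1)
proof (induction rule: vec.span_induct_alt)
  case base then show ?case by (simp add: D_zero)
next
  case (step c x y) then show ?case using assms(2) by (simp add: D_add D_scale)
qed

lemma linear_to_D:
  fixes F :: "'a::field^'n \<Rightarrow> 'a"
  assumes "Vector_Spaces.linear (*s) (*) F"
  shows "F x = D (\<chi> i. F (axis i 1)) x"
proof -
  interpret lf: Vector_Spaces.linear "(*s)" "(*)" F using assms .
  have "F x = F (\<Sum>i\<in>UNIV. (x$i) *s axis i 1)" by (simp add: basis_expansion)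
  also have "\<dots> = (\<Sum>i\<in>UNIV. x$i * F (axis i 1))" by (simp add: lf.sum lf.scale)
  finally show ?thesis by (simp add: D_def mult.commute)
qed

interpretation vp: vector_space_pair "(*s) :: 'a::field \<Rightarrow> 'a^'n \<Rightarrow> 'a^'n" "(*) :: 'a \<Rightarrow> 'a \<Rightarrow> 'a" ..

lemma exists_functional:
  fixes B :: "('a::field^'n) set"
  assumes "vec.independent B" "z \<in> B"
  shows "\<exists>f. D f z = 1 \<and> (\<forall>b\<in>B-{z}. D f b = 0)"
proof -
  define F where "F = vp.construct B (\<lambda>b. if b = z then (1::'a) else 0)"
  have lin: "Vector_Spaces.linear (*s) (*) F"
    unfolding F_def by (rule vp.linear_construct[OF assms(1)])
  have Fb: "F b = (if b = z then 1 else 0)" if "b \<in> B" for b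
    unfolding F_def using vp.construct_basis[OF assms(1) that] by simp
  show ?thesis
  proof (rule exI[of _ "\<chi> i. F (axis i 1)"], intro conjI ballI)
    show "D (\<chi> i. F (axis i 1)) z = 1" using Fb[OF assms(2)] linear_to_D[OF lin, of z] by simp
    fix b assume "b \<in> B - {z}"
    then show "D (\<chi> i. F (axis i 1)) b = 0" using Fb[of b] linear_to_D[OF lin, of b] by simp
  qed
qed


lemma point_span:
  fixes x :: "'a::field^'n"
  assumes "x \<noteq> 0"
  shows "vec.span {x} \<in> proj_points"
proof -
  have "vec.independent {x}"
    using assms vec.independent_insertI[of x "{}"] by auto
  then have "vec.dim {x} = 1" using vec.dim_eq_card_independent by fastforce
  then show ?thesis unfolding proj_points_def fsubspace_def fdim_def by simp
qed

lemma point_ex: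
  fixes P :: "('a::field^'n) set"
  assumes "P \<in> proj_points"
  shows "\<exists>x. x \<noteq> 0 \<and> P = vec.span {x}"
proof -
  have sP: "vec.subspace P" and dP: "vec.dim P = 1"
    using assms unfolding proj_points_def fsubspace_def fdim_def by auto
  obtain B where B: "B \<subseteq> P" "vec.independent B" "P \<subseteq> vec.span B" "card B = vec.dim P"
    by (rule vec.basis_exists[of P])
  then obtain x where Bx: "B = {x}" using dP card_1_singletonE by metis
  have "x \<noteq> 0" using B(2) Bx vec.dependent_zero by blast
  moreover have "vec.span {x} \<subseteq> P" using vec.span_minimal[OF _ sP] B(1) Bx by blast
  ultimately show ?thesis using B(3) Bx by blast
qed

lemma sub_functional:
  fixes U :: "('a::field^'n) set"
  assumes "vec.subspace U" "y \<notin> U"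
  shows "\<exists>g. D g y = 1 \<and> (\<forall>x\<in>U. D g x = 0)"
proof -
  obtain B where B: "B \<subseteq> U" "vec.independent B" "U \<subseteq> vec.span B"
    using vec.basis_exists[of U] by metis
  have sB: "vec.span B = U" using B vec.span_minimal[OF B(1) assms(1)] by blast
  have ind: "vec.independent (insert y B)"
    using vec.independent_insertI[of y B] B(2) assms(2) sB by blast
  obtain g where g: "D g y = 1" "\<forall>b\<in>insert y B - {y}. D g b = 0"
    using exists_functional[OF ind] by blast
  have "\<forall>x\<in>U. D g x = 0"
    using D_span0[of _ B g] g(2) B(1) assms(2) sB by blast
  with g show ?thesis by blast
qed

lemma hyperplane_functional:
  fixes H :: "('a::field^'n::finite) set"
  assumes "H \<in> proj_hyperplanes"
  shows "\<exists>f a. D f a = 1 \<and> (\<forall>x. D f x = 0 \<longrightarrow> x \<in> H) \<and> (\<forall>x\<in>H. D f x = 0)"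
proof -
  have sH: "vec.subspace H" and dH: "vec.dim H = CARD('n) - 1"
    using assms unfolding proj_hyperplanes_def fsubspace_def fdim_def by auto
  obtain B where B: "B \<subseteq> H" "vec.independent B" "H \<subseteq> vec.span B" "card B = vec.dim H"
    by (rule vec.basis_exists[of H])
  have sB: "vec.span B = H" using B vec.span_minimal[OF B(1) sH] by blast
  have "H \<noteq> UNIV"
  proof
    assume "H = UNIV"
    then have "vec.dim H = CARD('n)" using vec_dim_card by metis
    have "CARD('n) > 0" by (simp add: card_gt_0_iff)
    with dH \<open>vec.dim H = CARD('n)\<close> show False by linarith
  qed
  then obtain x0 where x0: "x0 \<notin> H" by blast
  have ind: "vec.independent (insert x0 B)"
    using vec.independent_insertI[of x0 B] B(2) x0 sB by blast
  have finB: "finite B" using B(2) vec.finiteI_independent by blast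
  have cardB: "card (insert x0 B) = vec.dim (UNIV :: ('a^'n) set)"
  proof -
    have "x0 \<notin> B" using x0 B(1) by blast
    then have "card (insert x0 B) = Suc (card B)" using finB by simp
    moreover have "CARD('n) > 0" by (simp add: card_gt_0_iff)
    ultimately show ?thesis using B(4) dH vec_dim_card[where 'a='a and 'n='n] by simp
  qed
  have spanU: "UNIV \<subseteq> vec.span (insert x0 B)"
    using vec.card_eq_dim[of "insert x0 B" UNIV] cardB finB ind by auto
  obtain f where f: "D f x0 = 1" "\<forall>b\<in>insert x0 B - {x0}. D f b = 0"
    using exists_functional[OF ind] by blast
  have fH: "\<forall>x\<in>H. D f x = 0"
    using D_span0[of _ B f] f(2) B(1) x0 sB by blast
  have "x \<in> H" if "D f x = 0" for x
  proof -
    have "x \<in> vec.span (insert x0 B)" using spanU by blast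
    then obtain c where c: "x - c *s x0 \<in> vec.span B" using vec.span_breakdown_eq by blast
    then have "D f (x - c *s x0) = 0" using fH sB by blast
    then have "c = 0" using that f(1) by (simp add: D_diff D_scale)
    then show ?thesis using c sB by simp
  qed
  then show ?thesis using f(1) fH by blast
qed


definition phi :: "'a::field^'n \<Rightarrow> 'a^'n \<Rightarrow> 'a^'n \<Rightarrow> 'a \<times> 'a" where
  "phi f g x = (D f x, D g x)"

lemma fiber_card:
  fixes f g a b :: "'a::{field,finite}^'n"
  assumes w: "D f a = 1" "D g a = 0" "D f b = 0" "D g b = 1"
  shows "card {x. phi f g x = p} = card {x. phi f g x = (0,0)}"
proof -
  define w where "w = fst p *s a + snd p *s b"
  have pw: "phi f g w = p" using assms by (simp add: phi_def w_def D_add D_scale)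
  have "{x. phi f g x = p} = (\<lambda>x. x + w) ` {x. phi f g x = (0,0)}"
  proof (intro equalityI subsetI)
    fix y assume "y \<in> {x. phi f g x = p}"
    then have "y - w \<in> {x. phi f g x = (0,0)}" using pw by (auto simp: phi_def D_diff)
    then show "y \<in> (\<lambda>x. x + w) ` {x. phi f g x = (0,0)}" by force
  next
    fix y assume "y \<in> (\<lambda>x. x + w) ` {x. phi f g x = (0,0)}"
    then show "y \<in> {x. phi f g x = p}" using pw by (auto simp: phi_def D_add)
  qed
  moreover have "inj_on (\<lambda>x. x + w) {x. phi f g x = (0,0)}" by (auto simp: inj_on_def)
  ultimately show ?thesis by (simp add: card_image)
qed

lemma fiber_sum:
  fixes f g a b :: "'a::{field,finite}^'n"
  assumes w: "D f a = 1" "D g a = 0" "D f b = 0" "D g b = 1"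
  shows "card {x. phi f g x \<in> C} = card C * card {x. phi f g x = (0,0)}"
proof -
  let ?S = "{x. phi f g x \<in> C}"
  have "(\<Sum>y\<in>C. \<Sum>x\<in>{x. x \<in> ?S \<and> phi f g x = y}. (1::nat)) = (\<Sum>x\<in>?S. 1)"
    by (rule sum.group) auto
  moreover have "{x. x \<in> ?S \<and> phi f g x = y} = {x. phi f g x = y}" if "y \<in> C" for y
    using that by auto
  ultimately have "card ?S = (\<Sum>y\<in>C. card {x. phi f g x = y})" by simp
  also have "\<dots> = (\<Sum>y\<in>C. card {x. phi f g x = (0,0)})"
    by (rule sum.cong[OF refl], rule fiber_card[OF assms])
  finally show ?thesis by simp
qed

lemma fiber_sum2:
  fixes f g a b :: "'a::{field,finite}^'n"
  assumes w: "D f a = 1" "D g a = 0" "D f b = 0" "D g b = 1"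
  shows "card {(u,v). (phi f g u, phi f g v) \<in> C} = card C * card {x. phi f g x = (0,0)} ^ 2"
proof -
  let ?S = "{(u,v). (phi f g u, phi f g v) \<in> C}"
  let ?h = "\<lambda>(u,v). (phi f g u, phi f g v)"
  let ?n = "card {x. phi f g x = (0,0)}"
  have "(\<Sum>y\<in>C. \<Sum>x\<in>{x. x \<in> ?S \<and> ?h x = y}. (1::nat)) = (\<Sum>x\<in>?S. 1)"
    by (rule sum.group) auto
  moreover have "{x. x \<in> ?S \<and> ?h x = y} = {x. phi f g x = fst y} \<times> {x. phi f g x = snd y}"
    if "y \<in> C" for y
    using that by auto
  ultimately have "card ?S = (\<Sum>y\<in>C. card ({x. phi f g x = fst y} \<times> {x. phi f g x = snd y}))"
    by simp
  also have "\<dots> = (\<Sum>y\<in>C. ?n * ?n)"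
  proof (rule sum.cong[OF refl])
    fix y
    show "card ({x. phi f g x = fst y} \<times> {x. phi f g x = snd y}) = ?n * ?n"
      unfolding card_cartesian_product fiber_card[OF assms, of "fst y"] fiber_card[OF assms, of "snd y"] ..
  qed
  finally show ?thesis by (simp add: power2_eq_square)
qed

lemma fiber0:
  fixes f g a b :: "'a::{field,finite}^'n"
  assumes w: "D f a = 1" "D g a = 0" "D f b = 0" "D g b = 1"
  shows "CARD('a)^CARD('n) = CARD('a)^2 * card {x. phi f g x = (0,0)}"
  using fiber_sum[OF assms, of UNIV] by (simp add: card_cartesian_product power2_eq_square)

definition C1 :: "('a::field \<times> 'a) set" where
  "C1 = {(x,y). x = 0 \<longrightarrow> y = 0}"

definition C2 :: "(('a::field \<times> 'a) \<times> ('a \<times> 'a)) set" where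
  "C2 = {((a1,a2),(b1,b2)). \<forall>\<alpha> \<beta>. \<alpha>*a1 + \<beta>*b1 = 0 \<longrightarrow> \<alpha>*a2 + \<beta>*b2 = 0}"

lemma card_C1: "card (C1 :: ('a::{field,finite} \<times> 'a) set) + CARD('a) = CARD('a)^2 + 1"
proof -
  let ?E = "Pair (0::'a) ` (UNIV - {0::'a})"
  have U: "(UNIV :: ('a\<times>'a) set) = C1 \<union> ?E" by (auto simp: C1_def)
  have dj: "(C1::('a\<times>'a) set) \<inter> ?E = {}" by (auto simp: C1_def)
  have cE: "card ?E = CARD('a) - 1"
    by (subst card_image) (auto simp: inj_on_def)
  have "CARD('a\<times>'a) = card (C1::('a\<times>'a) set) + card ?E"
    unfolding U by (rule card_Un_disjoint) (use dj in auto)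
  moreover have "CARD('a) \<ge> 1" by (simp add: Suc_leI card_gt_0_iff)
  ultimately show ?thesis using cE by (simp add: power2_eq_square)
qed

lemma card_C2: "card (C2 :: (('a::{field,finite} \<times> 'a) \<times> ('a \<times> 'a)) set) + CARD('a) \<le> CARD('a)^3 + 1"
proof -
  let ?A1 = "(\<lambda>b. ((0::'a,0::'a),b)) ` (C1::('a\<times>'a) set)"
  let ?A2 = "(\<lambda>((a1,a2),l). ((a1,a2),(l*a1,l*a2))) ` (({a::'a. a\<noteq>0} \<times> (UNIV::'a set)) \<times> (UNIV::'a set))"
  have sub: "C2 \<subseteq> ?A1 \<union> ?A2"
  proof
    fix z assume z: "z \<in> (C2 :: (('a \<times> 'a) \<times> ('a \<times> 'a)) set)"
    obtain a1 a2 b1 b2 where zz: "z = ((a1,a2),(b1,b2))" by (metis prod.collapse)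
    have H: "\<And>\<alpha> \<beta>. \<alpha>*a1 + \<beta>*b1 = 0 \<Longrightarrow> \<alpha>*a2 + \<beta>*b2 = 0" using z zz by (auto simp: C2_def)
    show "z \<in> ?A1 \<union> ?A2"
    proof (cases "a1 = 0")
      case True
      have "a2 = 0" using H[of 1 0] True by simp
      moreover have "b1 = 0 \<longrightarrow> b2 = 0" using H[of 0 1] True by simp
      ultimately have "z \<in> ?A1" using True zz by (auto simp: C1_def)
      then show ?thesis by blast
    next
      case False
      have "b1*a2 - a1*b2 = 0" using H[of b1 "-a1"] by (simp add: mult.commute)
      then have "b2 = (b1/a1)*a2" using False by (simp add: field_simps)
      moreover have "b1 = (b1/a1)*a1" using False by simp
      ultimately have "z = (\<lambda>((a1,a2),l). ((a1,a2),(l*a1,l*a2))) ((a1,a2),b1/a1)" using zz by simp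
      moreover have "((a1,a2),b1/a1) \<in> ({a::'a. a\<noteq>0} \<times> (UNIV::'a set)) \<times> (UNIV::'a set)"
        using False by simp
      ultimately show ?thesis by blast
    qed
  qed
  have "card (C2 :: (('a \<times> 'a) \<times> ('a \<times> 'a)) set) \<le> card (?A1 \<union> ?A2)" by (rule card_mono[OF _ sub]) simp
  also have "\<dots> \<le> card ?A1 + card ?A2" by (rule card_Un_le)
  also have "card ?A1 \<le> card (C1::('a\<times>'a) set)" by (rule card_image_le) simp
  also have "card ?A2 \<le> card (({a::'a. a\<noteq>0} \<times> (UNIV::'a set)) \<times> (UNIV::'a set))"
    by (rule card_image_le) simp
  also have "\<dots> = (CARD('a) - 1) * CARD('a) * CARD('a)"
  proof -
    have "{a::'a. a\<noteq>0} = UNIV - {0}" by auto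
    then have "card {a::'a. a\<noteq>0} = CARD('a) - 1" by simp
    then show ?thesis by (simp add: card_cartesian_product)
  qed
  finally have "card (C2 :: (('a \<times> 'a) \<times> ('a \<times> 'a)) set) \<le> card (C1::('a\<times>'a) set) + (CARD('a) - 1) * CARD('a) * CARD('a)"
    by simp
  moreover have "CARD('a) \<ge> 1" by (simp add: Suc_leI card_gt_0_iff)
  ultimately show ?thesis using card_C1[where 'a='a]
    by (cases "CARD('a)") (auto simp: power2_eq_square power3_eq_cube algebra_simps)
qed

definition PP :: "(('a::field^'n) \<times> ('a^'n)) set" where
  "PP = {(f,g). \<exists>a b. D f a = 1 \<and> D g a = 0 \<and> D f b = 0 \<and> D g b = 1}"

definition good :: "'a::field^'n \<Rightarrow> 'a^'n \<Rightarrow> ('a^'n) set \<Rightarrow> bool" where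
  "good f g V \<longleftrightarrow> (\<forall>x\<in>V. D f x = 0 \<longrightarrow> D g x = 0)"

lemma bad_many:
  fixes Sp :: "'b \<Rightarrow> ('a::{field,finite}^'n) set"
  assumes fg: "(f,g) \<in> PP" "\<forall>i<m. good f g (Sp (bs i))"
  shows "CARD('a) * (CARD('a) - 1) \<le> card {p\<in>PP. \<forall>i<m. good (fst p) (snd p) (Sp (bs i))}"
proof -
  obtain a b where w: "D f a = 1" "D g a = 0" "D f b = 0" "D g b = 1"
    using fg(1) by (auto simp: PP_def)
  let ?h = "\<lambda>(c::'a, e::'a). (f, c *s g + e *s f)"
  let ?A = "(UNIV - {0::'a}) \<times> (UNIV::'a set)"
  have inj: "inj_on ?h ?A"
  proof (rule inj_onI)
    fix x y assume xy: "x \<in> ?A" "y \<in> ?A" "?h x = ?h y"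
    obtain c e where x: "x = (c,e)" by (metis prod.collapse)
    obtain c' e' where y: "y = (c',e')" by (metis prod.collapse)
    have eq: "c *s g + e *s f = c' *s g + e' *s f" using xy(3) x y by simp
    have "D (c *s g + e *s f) b = D (c' *s g + e' *s f) b" using eq by simp
    then have "c = c'" using w by (simp add: D_left)
    moreover have "D (c *s g + e *s f) a = D (c' *s g + e' *s f) a" using eq by simp
    then have "e = e'" using w by (simp add: D_left)
    ultimately show "x = y" using x y by simp
  qed
  have img: "?h ` ?A \<subseteq> {p\<in>PP. \<forall>i<m. good (fst p) (snd p) (Sp (bs i))}"
  proof
    fix p assume "p \<in> ?h ` ?A"
    then obtain c e where ce: "c \<noteq> 0" "p = (f, c *s g + e *s f)" by auto
    have "(f, c *s g + e *s f) \<in> PP"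
      unfolding PP_def
    proof (clarsimp, intro exI conjI)
      show "D f (a - (e/c) *s b) = 1" using w by (simp add: D_diff D_scale)
      show "D (c *s g + e *s f) (a - (e/c) *s b) = 0" using w ce(1)
        by (simp add: D_left D_diff D_scale)
      show "D f ((1/c) *s b) = 0" using w by (simp add: D_scale)
      show "D (c *s g + e *s f) ((1/c) *s b) = 1" using w ce(1) by (simp add: D_left D_scale)
    qed
    moreover have "good f (c *s g + e *s f) (Sp (bs i))" if "i < m" for i
      using fg(2) that by (auto simp: good_def D_left)
    ultimately show "p \<in> {p\<in>PP. \<forall>i<m. good (fst p) (snd p) (Sp (bs i))}" using ce by simp
  qed
  have "card ?A = CARD('a) * (CARD('a) - 1)"
    by (simp add: card_cartesian_product)
  also have "\<dots> = card (?h ` ?A)" using inj by (simp add: card_image)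
  also have "\<dots> \<le> card {p\<in>PP. \<forall>i<m. good (fst p) (snd p) (Sp (bs i))}"
    by (rule card_mono[OF _ img]) simp
  finally show ?thesis by (simp add: mult.commute)
qed

lemma card_PP: "card (PP :: (('a::{field,finite}^'n) \<times> ('a^'n)) set) \<le> CARD('a)^(2*CARD('n))"
proof -
  have "card (PP :: (('a^'n) \<times> ('a^'n)) set) \<le> CARD(('a^'n) \<times> ('a^'n))"
    by (rule card_mono) auto
  also have "\<dots> = CARD('a)^(2*CARD('n))"
    by (simp add: card_cartesian_product power_mult power2_eq_square[symmetric] mult.commute)
  finally show ?thesis .
qed

lemma exists_good:
  fixes Sp :: "'b \<Rightarrow> ('a::{field,finite}^'n) set" and \<Omega> :: "'b set"
  assumes fin: "finite \<Omega>" and ne: "\<Omega> \<noteq> {}"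
    and cnt: "\<And>f g. (f,g) \<in> PP \<Longrightarrow> card {\<beta>\<in>\<Omega>. good f g (Sp \<beta>)} * d \<le> e * card \<Omega>"
    and ineq: "CARD('a)^(2*CARD('n)) * e^m < CARD('a)*(CARD('a)-1) * d^m"
  shows "\<exists>bs \<in> PiE {..<m} (\<lambda>_. \<Omega>). \<forall>f g. (f,g) \<in> PP \<longrightarrow> \<not>(\<forall>i<m. good f g (Sp (bs i)))"
proof (rule ccontr)
  let ?X = "PiE {..<m} (\<lambda>_. \<Omega>)"
  let ?q = "CARD('a)"
  let ?Bad = "\<lambda>bs. {p\<in>PP. \<forall>i<m. good (fst p) (snd p) (Sp (bs i))}"
  let ?G = "\<lambda>p. {\<beta>\<in>\<Omega>. good (fst p) (snd p) (Sp \<beta>)}"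
  assume "\<not> ?thesis"
  then have allbad: "\<forall>bs\<in>?X. \<exists>f g. (f,g) \<in> PP \<and> (\<forall>i<m. good f g (Sp (bs i)))" by blast
  have finX: "finite ?X" using fin by (simp add: finite_PiE)
  have cX: "card ?X = card \<Omega> ^ m" using fin by (simp add: card_PiE)
  have finPP: "finite (PP :: (('a^'n) \<times> ('a^'n)) set)" by simp
  have "card ?X * (?q * (?q - 1)) = (\<Sum>bs\<in>?X. ?q * (?q - 1))" by simp
  also have "\<dots> \<le> (\<Sum>bs\<in>?X. card (?Bad bs))"
  proof (rule sum_mono)
    fix bs assume "bs \<in> ?X"
    then obtain f g where "(f,g) \<in> PP" "\<forall>i<m. good f g (Sp (bs i))" using allbad by blast
    then show "?q * (?q - 1) \<le> card (?Bad bs)" by (rule bad_many)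
  qed
  also have "\<dots> = (\<Sum>bs\<in>?X. \<Sum>p\<in>PP. if (\<forall>i<m. good (fst p) (snd p) (Sp (bs i))) then 1 else 0)"
    by (rule sum.cong[OF refl]) (simp add: sum.If_cases[OF finPP] Int_def)
  also have "\<dots> = (\<Sum>p\<in>PP. \<Sum>bs\<in>?X. if (\<forall>i<m. good (fst p) (snd p) (Sp (bs i))) then 1 else 0)"
    by (rule sum.swap)
  also have "\<dots> = (\<Sum>p\<in>PP. card (?G p) ^ m)"
  proof (rule sum.cong[OF refl])
    fix p :: "('a^'n) \<times> ('a^'n)"
    have "(\<Sum>bs\<in>?X. if (\<forall>i<m. good (fst p) (snd p) (Sp (bs i))) then 1 else 0)
        = card {bs\<in>?X. \<forall>i<m. good (fst p) (snd p) (Sp (bs i))}"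
      by (simp add: sum.If_cases[OF finX] Int_def)
    also have "{bs\<in>?X. \<forall>i<m. good (fst p) (snd p) (Sp (bs i))} = PiE {..<m} (\<lambda>_. ?G p)"
      by (auto simp: PiE_def Pi_def)
    also have "card \<dots> = card (?G p) ^ m" by (simp add: card_PiE)
    finally show "(\<Sum>bs\<in>?X. if (\<forall>i<m. good (fst p) (snd p) (Sp (bs i))) then 1 else 0) = card (?G p) ^ m" .
  qed
  finally have A: "card \<Omega> ^ m * (?q * (?q - 1)) \<le> (\<Sum>p\<in>PP. card (?G p) ^ m)" using cX by simp
  have "(\<Sum>p\<in>PP. card (?G p) ^ m) * d^m = (\<Sum>p\<in>PP. (card (?G p) * d) ^ m)"
    by (simp add: sum_distrib_right power_mult_distrib)
  also have "\<dots> \<le> (\<Sum>p\<in>(PP :: (('a^'n) \<times> ('a^'n)) set). (e * card \<Omega>) ^ m)"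
  proof (rule sum_mono)
    fix p :: "('a^'n) \<times> ('a^'n)" assume "p \<in> PP"
    then have "card (?G p) * d \<le> e * card \<Omega>" using cnt[of "fst p" "snd p"] by simp
    then show "(card (?G p) * d) ^ m \<le> (e * card \<Omega>) ^ m" by (rule power_mono) simp
  qed
  also have "\<dots> = card (PP :: (('a^'n) \<times> ('a^'n)) set) * e^m * card \<Omega> ^ m"
    by (simp add: power_mult_distrib)
  also have "\<dots> \<le> ?q^(2*CARD('n)) * e^m * card \<Omega> ^ m"
    using card_PP[where 'a='a and 'n='n] by (intro mult_right_mono) auto
  finally have B: "(\<Sum>p\<in>PP. card (?G p) ^ m) * d^m \<le> ?q^(2*CARD('n)) * e^m * card \<Omega> ^ m" .
  have "card \<Omega> ^ m * (?q * (?q - 1) * d^m) = (card \<Omega> ^ m * (?q * (?q - 1))) * d^m"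
    by (simp only: mult.assoc)
  also have "\<dots> \<le> (\<Sum>p\<in>PP. card (?G p) ^ m) * d^m"
    using A by (rule mult_right_mono) simp
  also have "\<dots> \<le> ?q^(2*CARD('n)) * e^m * card \<Omega> ^ m" by (rule B)
  also have "\<dots> = card \<Omega> ^ m * (?q^(2*CARD('n)) * e^m)" by (simp only: mult.commute)
  finally have "card \<Omega> ^ m * (?q * (?q - 1) * d^m) \<le> card \<Omega> ^ m * (?q^(2*CARD('n)) * e^m)" .
  moreover have "card \<Omega> ^ m > 0" using fin ne by (simp add: card_gt_0_iff)
  ultimately have "?q * (?q - 1) * d^m \<le> ?q^(2*CARD('n)) * e^m"
    using mult_le_cancel1[of "card \<Omega> ^ m" "?q * (?q - 1) * d^m" "?q^(2*CARD('n)) * e^m"] by blast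
  with ineq show False by simp
qed

lemma sbs_from_good:
  fixes Sp :: "'b \<Rightarrow> ('a::{field,finite}^'n) set"
  assumes sub: "\<And>i. i < m \<Longrightarrow> vec.subspace (Sp (bs i))"
    and nobad: "\<forall>f g. (f,g) \<in> PP \<longrightarrow> \<not>(\<forall>i<m. good f g (Sp (bs i)))"
  shows "strong_blocking_set {P \<in> proj_points. \<exists>i<m. P \<subseteq> Sp (bs i)}"
  unfolding strong_blocking_set_def
proof (intro conjI ballI)
  let ?S = "{P \<in> proj_points. \<exists>i<m. P \<subseteq> Sp (bs i)}"
  show "?S \<subseteq> proj_points" by blast
  fix H :: "('a^'n) set" assume H: "H \<in> proj_hyperplanes"
  have sH: "vec.subspace H" using H unfolding proj_hyperplanes_def fsubspace_def by auto
  let ?U = "vec.span (\<Union>{P \<in> ?S. P \<subseteq> H})"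
  have UH: "?U \<subseteq> H" by (rule vec.span_minimal[OF _ sH]) blast
  show "fspan (\<Union>{P \<in> ?S. P \<subseteq> H}) = H"
  proof (rule ccontr)
    assume "fspan (\<Union>{P \<in> ?S. P \<subseteq> H}) \<noteq> H"
    then have "?U \<noteq> H" unfolding fspan_def by simp
    then obtain y0 where y0: "y0 \<in> H" "y0 \<notin> ?U" using UH by blast
    obtain f a where f: "D f a = 1" "\<forall>x. D f x = 0 \<longrightarrow> x \<in> H" "\<forall>x\<in>H. D f x = 0"
      using hyperplane_functional[OF H] by blast
    obtain g0 where g0: "D g0 y0 = 1" "\<forall>x\<in>?U. D g0 x = 0"
      using sub_functional[OF vec.subspace_span y0(2)] by blast
    define g where "g = 1 *s g0 + (- D g0 a) *s f"
    have Dg: "D g x = D g0 x - D g0 a * D f x" for x unfolding g_def using D_left[of 1 g0 "- D g0 a" f x] by simp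
    have "D f y0 = 0" using f(3) y0(1) by blast
    then have "D f a = 1 \<and> D g a = 0 \<and> D f y0 = 0 \<and> D g y0 = 1"
      using f(1) g0(1) by (simp add: Dg)
    then have "(f,g) \<in> PP" unfolding PP_def by (intro CollectI case_prodI exI)
    moreover have "good f g (Sp (bs i))" if i: "i < m" for i
      unfolding good_def
    proof (intro ballI impI)
      fix x assume x: "x \<in> Sp (bs i)" "D f x = 0"
      have xH: "x \<in> H" using f(2) x(2) by blast
      show "D g x = 0"
      proof (cases "x = 0")
        case True then show ?thesis by (simp add: D_zero)
      next
        case False
        have P: "vec.span {x} \<in> proj_points" by (rule point_span[OF False])
        have "vec.span {x} \<subseteq> Sp (bs i)" using vec.span_minimal[OF _ sub[OF i]] x(1) by blast
        moreover have "vec.span {x} \<subseteq> H" using vec.span_minimal[OF _ sH] xH by blast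
        ultimately have "vec.span {x} \<in> {P \<in> ?S. P \<subseteq> H}" using P i by blast
        then have "x \<in> \<Union>{P \<in> ?S. P \<subseteq> H}" using vec.span_base[of x "{x}"] by blast
        then have "x \<in> ?U" by (rule vec.span_base)
        then show ?thesis using g0(2) x(2) by (simp add: Dg)
      qed
    qed
    ultimately show False using nobad by auto
  qed
qed

lemma card_S_le:
  fixes Sp :: "'b \<Rightarrow> ('a::{field,finite}^'n) set"
  assumes "\<And>i. i < m \<Longrightarrow> card {P \<in> proj_points. P \<subseteq> Sp (bs i)} \<le> s"
  shows "card {P \<in> proj_points. \<exists>i<m. P \<subseteq> Sp (bs i)} \<le> s * m"
proof -
  have "{P \<in> proj_points. \<exists>i<m. P \<subseteq> Sp (bs i)} = (\<Union>i\<in>{..<m}. {P \<in> proj_points. P \<subseteq> Sp (bs i)})"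
    by auto
  then have "card {P \<in> proj_points. \<exists>i<m. P \<subseteq> Sp (bs i)} \<le> (\<Sum>i\<in>{..<m}. card {P \<in> proj_points. P \<subseteq> Sp (bs i)})"
    using card_UN_le[of "{..<m}" "\<lambda>i. {P \<in> proj_points. P \<subseteq> Sp (bs i)}"] by simp
  also have "\<dots> \<le> (\<Sum>i\<in>{..<m}. s)" by (rule sum_mono) (use assms in auto)
  finally show ?thesis by (simp add: mult.commute)
qed

lemma span_scale_eq:
  fixes x :: "'a::field^'n"
  assumes "c \<noteq> 0"
  shows "vec.span {c *s x} = vec.span {x}"
proof
  show "vec.span {c *s x} \<subseteq> vec.span {x}"
    by (rule vec.span_minimal) (auto intro: vec.span_scale vec.span_base)
  have "x = (1/c) *s (c *s x)" using assms by simp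
  then have "x \<in> vec.span {c *s x}" by (metis vec.span_scale vec.span_base singletonI)
  then show "vec.span {x} \<subseteq> vec.span {c *s x}"
    using vec.span_minimal[of "{x}" "vec.span {c *s x}"] by auto
qed

lemma points_in_span1:
  fixes u :: "'a::{field,finite}^'n"
  shows "card {P \<in> proj_points. P \<subseteq> vec.span {u}} \<le> 1"
proof -
  have "{P \<in> proj_points. P \<subseteq> vec.span {u}} \<subseteq> {vec.span {u}}"
  proof
    fix P assume P: "P \<in> {P \<in> proj_points. P \<subseteq> vec.span {u}}"
    then obtain x where x: "x \<noteq> 0" "P = vec.span {x}" using point_ex by blast
    then have "x \<in> vec.span {u}" using P vec.span_base[of x "{x}"] by blast
    then obtain c where c: "x = c *s u" using vec.span_singleton by auto
    then have "c \<noteq> 0" using x(1) by auto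
    then show "P \<in> {vec.span {u}}" using x(2) c span_scale_eq by simp
  qed
  then have "card {P \<in> proj_points. P \<subseteq> vec.span {u}} \<le> card {vec.span {u}}"
    by (rule card_mono[rotated]) simp
  then show ?thesis by simp
qed

lemma points_in_span2:
  fixes u v :: "'a::{field,finite}^'n"
  shows "card {P \<in> proj_points. P \<subseteq> vec.span {u, v}} \<le> CARD('a) + 1"
proof -
  have "{P \<in> proj_points. P \<subseteq> vec.span {u, v}} \<subseteq> insert (vec.span {v}) (range (\<lambda>t. vec.span {u + t *s v}))"
  proof
    fix P assume P: "P \<in> {P \<in> proj_points. P \<subseteq> vec.span {u, v}}"
    then obtain x where x: "x \<noteq> 0" "P = vec.span {x}" using point_ex by blast
    then have "x \<in> vec.span {u, v}" using P vec.span_base[of x "{x}"] by blast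
    then obtain a where a: "x - a *s u \<in> vec.span {v}" using vec.span_breakdown_eq by blast
    then obtain b where b: "x - a *s u = b *s v" using vec.span_singleton by auto
    then have xe: "x = a *s u + b *s v" by (simp add: algebra_simps)
    show "P \<in> insert (vec.span {v}) (range (\<lambda>t. vec.span {u + t *s v}))"
    proof (cases "a = 0")
      case True
      then have "x = b *s v" using xe by simp
      then have "b \<noteq> 0" using x(1) by auto
      then have "P = vec.span {v}" using x(2) \<open>x = b *s v\<close> span_scale_eq by simp
      then show ?thesis by simp
    next
      case False
      then have "x = a *s (u + (b/a) *s v)" using xe by (simp add: vector_add_ldistrib)
      then have "P = vec.span {u + (b/a) *s v}" using x(2) span_scale_eq False by simp
      then show ?thesis by blast
    qed
  qed
  then have "card {P \<in> proj_points. P \<subseteq> vec.span {u, v}} \<le> card (insert (vec.span {v}) (range (\<lambda>t. vec.span {u + t *s v})))"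
    by (rule card_mono[rotated]) simp
  also have "\<dots> \<le> Suc (card (range (\<lambda>t::'a. vec.span {u + t *s v})))" by (rule card_insert_le_m1) simp_all
  also have "card (range (\<lambda>t::'a. vec.span {u + t *s v})) \<le> CARD('a)" by (rule card_image_le) simp
  finally show ?thesis by simp
qed

lemma cnt1:
  fixes f g :: "'a::{field,finite}^'n"
  assumes "(f,g) \<in> PP"
  shows "card {u. good f g (vec.span {u})} * CARD('a)^2 + CARD('a) * CARD('a)^CARD('n)
     \<le> (CARD('a)^2 + 1) * CARD('a)^CARD('n)"
proof -
  obtain a b where w: "D f a = 1" "D g a = 0" "D f b = 0" "D g b = 1"
    using assms by (auto simp: PP_def)
  let ?n = "card {x. phi f g x = (0,0)}"
  have "{u. good f g (vec.span {u})} \<subseteq> {u. phi f g u \<in> C1}"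
    using vec.span_base[of _ "{_}"] by (auto simp: good_def phi_def C1_def)
  then have "card {u. good f g (vec.span {u})} \<le> card {u. phi f g u \<in> C1}"
    by (rule card_mono[rotated]) simp
  also have "\<dots> = card (C1::('a\<times>'a) set) * ?n" by (rule fiber_sum[OF w])
  finally have "card {u. good f g (vec.span {u})} * CARD('a)^2 + CARD('a) * CARD('a)^CARD('n)
     \<le> card (C1::('a\<times>'a) set) * ?n * CARD('a)^2 + CARD('a) * (CARD('a)^2 * ?n)"
    using fiber0[OF w] by simp
  also have "\<dots> = (card (C1::('a\<times>'a) set) + CARD('a)) * (CARD('a)^2 * ?n)"
    by (simp add: algebra_simps)
  also have "\<dots> = (CARD('a)^2 + 1) * CARD('a)^CARD('n)"
    using card_C1[where 'a='a] fiber0[OF w] by simp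
  finally show ?thesis .
qed

lemma cnt2:
  fixes f g :: "'a::{field,finite}^'n"
  assumes "(f,g) \<in> PP"
  shows "card {p. good f g (vec.span {fst p, snd p})} * CARD('a)^4 + CARD('a) * CARD('a)^(2*CARD('n))
     \<le> (CARD('a)^3 + 1) * CARD('a)^(2*CARD('n))"
proof -
  obtain a b where w: "D f a = 1" "D g a = 0" "D f b = 0" "D g b = 1"
    using assms by (auto simp: PP_def)
  let ?n = "card {x. phi f g x = (0,0)}"
  have "{p. good f g (vec.span {fst p, snd p})} \<subseteq> {(u,v). (phi f g u, phi f g v) \<in> C2}"
  proof (clarsimp simp: C2_def phi_def)
    fix u v \<alpha> \<beta>
    assume g: "good f g (vec.span {u, v})" and e: "\<alpha> * D f u + \<beta> * D f v = 0"
    have "\<alpha> *s u + \<beta> *s v \<in> vec.span {u, v}"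
      by (intro vec.span_add vec.span_scale vec.span_base) auto
    moreover have "D f (\<alpha> *s u + \<beta> *s v) = 0" using e by (simp add: D_add D_scale)
    ultimately have "D g (\<alpha> *s u + \<beta> *s v) = 0" using g by (simp add: good_def)
    then show "\<alpha> * D g u + \<beta> * D g v = 0" by (simp add: D_add D_scale)
  qed
  then have "card {p. good f g (vec.span {fst p, snd p})} \<le> card {(u,v). (phi f g u, phi f g v) \<in> C2}"
    by (rule card_mono[rotated]) simp
  also have "\<dots> = card (C2::(('a\<times>'a)\<times>('a\<times>'a)) set) * ?n^2" by (rule fiber_sum2[OF w])
  finally have A: "card {p. good f g (vec.span {fst p, snd p})} \<le> card (C2::(('a\<times>'a)\<times>('a\<times>'a)) set) * ?n^2" .
  have "CARD('a)^(2*CARD('n)) = (CARD('a)^CARD('n))^2"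
    by (metis power_mult mult.commute)
  also have "\<dots> = (CARD('a)^2 * ?n)^2" using fiber0[OF w] by simp
  also have "\<dots> = CARD('a)^4 * ?n^2" by (simp add: power_mult_distrib flip: power_mult)
  finally have q2: "CARD('a)^(2*CARD('n)) = CARD('a)^4 * ?n^2" .
  have "card {p. good f g (vec.span {fst p, snd p})} * CARD('a)^4 + CARD('a) * CARD('a)^(2*CARD('n))
     \<le> card (C2::(('a\<times>'a)\<times>('a\<times>'a)) set) * ?n^2 * CARD('a)^4 + CARD('a) * (CARD('a)^4 * ?n^2)"
    using A q2 by simp
  also have "\<dots> = (card (C2::(('a\<times>'a)\<times>('a\<times>'a)) set) + CARD('a)) * (CARD('a)^4 * ?n^2)"
    by (simp add: algebra_simps)
  also have "\<dots> \<le> (CARD('a)^3 + 1) * (CARD('a)^4 * ?n^2)"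
    using card_C2[where 'a='a] by (intro mult_right_mono) auto
  finally show ?thesis using q2 by simp
qed

lemma pow_floor_bound:
  fixes b s :: real
  assumes "b > 1" "s \<ge> 0"
  shows "b powr s \<le> b ^ (nat \<lfloor>s\<rfloor> + 1)"
proof -
  have "s \<le> real (nat \<lfloor>s\<rfloor> + 1)" using assms(2) by linarith
  then have "b powr s \<le> b powr real (nat \<lfloor>s\<rfloor> + 1)" using assms(1) by (intro powr_mono) auto
  also have "\<dots> = b ^ (nat \<lfloor>s\<rfloor> + 1)" by (rule powr_realpow) (use assms in simp)
  finally show ?thesis .
qed

lemma lines_real:
  fixes q :: real and k :: nat
  assumes q: "q \<ge> 3"
  defines "R \<equiv> q^4 / (q^3 - q + 1)"
  defines "m \<equiv> nat \<lfloor>2 * real k / log q R\<rfloor>"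
  shows "q^(2*k) * (q^3 - q + 1)^m < q * (q - 1) * (q^4)^m"
proof -
  have qq: "1 \<le> q*q" using mult_mono[of 1 q 1 q] q by simp
  have q3: "q \<le> q^3" using mult_left_mono[OF qq, of q] q by (simp add: power3_eq_cube)
  have c0: "q^3 - q + 1 > 0" using q3 by simp
  have R1: "R > 1"
  proof -
    have "3 * q^3 \<le> q * q^3" using q by (intro mult_right_mono) auto
    then have "3 * q^3 \<le> q^4" by (simp add: power3_eq_cube power4_eq_xxxx)
    then have "q^3 - q + 1 < q^4" using q q3 by simp
    then show ?thesis unfolding R_def using c0 by simp
  qed
  have Rlt: "R < q * (q - 1)"
  proof -
    have "q^4 < q * (q - 1) * (q^3 - q + 1)"
    proof -
      have "q^3 * 1 \<le> q^3 * (q - 2)" using q by (intro mult_left_mono) auto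
      then have e1: "q^3 \<le> q^3 * q - 2 * q^3" by (simp add: right_diff_distrib)
      have "q^2 * 3 \<le> q^2 * q" using q by (intro mult_left_mono) auto
      then have e2: "3 * q^2 \<le> q^3" by (simp add: power2_eq_square power3_eq_cube mult.commute)
      have e3: "q^4 = q^3 * q" by (simp add: power3_eq_cube power4_eq_xxxx)
      have e4: "q^2 \<ge> 0" by simp
      have "q^4 - 2*q^3 - q^2 + 2*q - 1 > 0" using e1 e2 e3 e4 q by linarith
      then have "q * (q^4 - 2*q^3 - q^2 + 2*q - 1) > 0" using q by simp
      moreover have "q * (q - 1) * (q^3 - q + 1) - q^4 = q * (q^4 - 2*q^3 - q^2 + 2*q - 1)"
        by (simp add: algebra_simps power2_eq_square power3_eq_cube power4_eq_xxxx)
      ultimately show ?thesis by linarith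
    qed
    then show ?thesis unfolding R_def using c0 by (simp add: divide_less_eq)
  qed
  have L0: "log q R > 0" using R1 q by simp
  have "q^(2*k) = q powr real (2*k)" by (rule powr_realpow[symmetric]) (use q in simp)
  also have "\<dots> = q powr (2 * real k)" by simp
  also have "q powr (2 * real k) = R powr (2 * real k / log q R)"
    using q R1 L0 by (simp add: powr_def log_def)
  also have "\<dots> \<le> R ^ (m + 1)" unfolding m_def
    by (rule pow_floor_bound) (use R1 L0 in auto)
  finally have A: "q^(2*k) \<le> R^(m+1)" .
  have "q^(2*k) * (q^3 - q + 1)^m \<le> R^(m+1) * (q^3 - q + 1)^m"
    using A c0 by (intro mult_right_mono) auto
  also have "\<dots> = R * (q^4)^m"
    unfolding R_def using c0 by (simp add: power_divide)
  also have "\<dots> < q * (q - 1) * (q^4)^m"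
    using Rlt q by (intro mult_strict_right_mono) auto
  finally show ?thesis .
qed

lemma points_real:
  fixes k :: nat
  defines "M \<equiv> nat \<lfloor>(2 + 1) * (2 * real k) / log 2 ((2::real)^4 / (2^3 - 2 + 1))\<rfloor>"
  shows "(2::real)^(2*k) * 3^M < 2 * 4^M"
proof -
  define L where "L = log 2 ((2::real)^4 / (2^3 - 2 + 1))"
  have L: "L = ln (16/7) / ln 2" unfolding L_def log_def by simp
  have l0: "ln (16/7::real) > 0" by simp
  have l1: "ln (16/7::real) \<le> 3 * ln (4/3)"
  proof -
    have "ln (16/7::real) \<le> ln ((4/3)^3)" by (subst ln_le_cancel_iff) (auto simp: power3_eq_cube)
    then show ?thesis by (simp add: ln_realpow)
  qed
  have L0: "L > 0" using L l0 by simp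
  have "(2::real)^(2*k) = 2 powr real (2*k)" by (rule powr_realpow[symmetric]) simp
  also have "\<dots> = exp (2 * real k * ln 2)" by (simp add: powr_def)
  also have "\<dots> \<le> exp ((3 * 2 * real k / L) * ln (4/3))"
  proof -
    have "2 * real k * ln 2 * ln (16/7) \<le> 2 * real k * ln 2 * (3 * ln (4/3))"
      using l1 by (intro mult_left_mono) auto
    then have "2 * real k * ln 2 \<le> (3 * 2 * real k / L) * ln (4/3)"
      unfolding L using l0 by (simp add: field_simps)
    then show ?thesis by simp
  qed
  also have "\<dots> = (4/3::real) powr (3 * 2 * real k / L)" by (simp add: powr_def)
  also have "\<dots> \<le> (4/3) ^ (M + 1)" unfolding M_def L_def[symmetric]
    using pow_floor_bound[of "4/3" "3 * 2 * real k / L"] L0 by simp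
  finally have A: "(2::real)^(2*k) \<le> (4/3)^(M+1)" .
  have "(2::real)^(2*k) * 3^M \<le> (4/3)^(M+1) * 3^M" using A by (intro mult_right_mono) auto
  also have "\<dots> = 4/3 * 4^M" by (simp add: power_divide field_simps)
  also have "\<dots> < 2 * 4^M" by simp
  finally show ?thesis .
qed

lemma card_field_ge2: "CARD('a::{field,finite}) \<ge> 2"
proof -
  have "card {0::'a, 1} \<le> CARD('a)" by (rule card_mono) auto
  then show ?thesis by simp
qed

theorem theorem1p3:
  assumes "CARD('n) \<ge> 2"
  shows "\<exists>S :: ('a::{finite,field} ^ 'n::finite) set set. strong_blocking_set S \<and>
    real (card S) \<le> (real CARD('a) + 1) * (2 * real CARD('n)) /
      log (real CARD('a)) ((real CARD('a))^4 / ((real CARD('a))^3 - real CARD('a) + 1))"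
proof -
  let ?q = "CARD('a)"
  let ?k = "CARD('n)"
  define L where "L = log (real ?q) ((real ?q)^4 / ((real ?q)^3 - real ?q + 1))"
  have q2: "?q \<ge> 2" by (rule card_field_ge2)
  have L0: "L > 0"
  proof -
    have qq: "1 \<le> real ?q * real ?q" using mult_mono[of 1 "real ?q" 1 "real ?q"] q2 by simp
    have q3: "real ?q \<le> real ?q^3" using mult_left_mono[OF qq, of "real ?q"] by (simp add: power3_eq_cube)
    have c0: "real ?q^3 - real ?q + 1 > 0" using q3 by linarith
    have "2 * real ?q^3 \<le> real ?q * real ?q^3" using q2 by (intro mult_right_mono) auto
    then have f4: "2 * real ?q^3 \<le> real ?q^4" by (simp add: power3_eq_cube power4_eq_xxxx)
    have "real ?q \<ge> 2" using q2 by simp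
    then have "real ?q^3 - real ?q + 1 < real ?q^4" using f4 q3 \<open>real ?q \<ge> 2\<close> by linarith
    then have "(real ?q)^4 / ((real ?q)^3 - real ?q + 1) > 1" using c0 by simp
    then show ?thesis unfolding L_def using q2 by simp
  qed
  show ?thesis
  proof (cases "?q = 2")
    case True
    define M where "M = nat \<lfloor>(2 + 1) * (2 * real ?k) / log 2 ((2::real)^4 / (2^3 - 2 + 1))\<rfloor>"
    have ineqR: "(2::real)^(2*?k) * 3^M < 2 * 4^M" unfolding M_def by (rule points_real)
    have ineq: "?q^(2*?k) * 3^M < ?q * (?q - 1) * 4^M"
    proof -
      have "real (2^(2*?k) * 3^M) < real (2 * 4^M)" using ineqR by simp
      then have "2^(2*?k) * 3^M < (2 * 4^M :: nat)" by linarith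
      then show ?thesis using True by simp
    qed
    have cnt: "card {\<beta>\<in>UNIV. good f g (vec.span {\<beta>})} * 4 \<le> 3 * card (UNIV :: ('a^'n) set)"
      if "(f,g) \<in> PP" for f g :: "'a^'n"
      using cnt1[OF that] True by simp
    obtain bs where bs: "bs \<in> PiE {..<M} (\<lambda>_. UNIV)"
      "\<forall>f g. (f,g) \<in> PP \<longrightarrow> \<not>(\<forall>i<M. good f g (vec.span {bs i :: 'a^'n}))"
      using exists_good[of "UNIV :: ('a^'n) set" "\<lambda>u. vec.span {u}" 4 3 M, OF _ _ cnt ineq] by auto
    define S where "S = {P \<in> proj_points. \<exists>i<M. P \<subseteq> vec.span {bs i}}"
    have sb: "strong_blocking_set S" unfolding S_def
      using sbs_from_good[of M "\<lambda>u. vec.span {u}" bs] bs(2) by simp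
    have cS: "card S \<le> 1 * M" unfolding S_def
      by (rule card_S_le) (rule points_in_span1)
    have "real M \<le> (2 + 1) * (2 * real ?k) / log 2 ((2::real)^4 / (2^3 - 2 + 1))"
      unfolding M_def using L0 True unfolding L_def by simp
    then have "real (card S) \<le> (real ?q + 1) * (2 * real ?k) / L"
      using cS True unfolding L_def by simp
    then show ?thesis using sb unfolding L_def by blast
  next
    case False
    then have q3: "?q \<ge> 3" using q2 by simp
    define m where "m = nat \<lfloor>2 * real ?k / L\<rfloor>"
    have ineqR: "(real ?q)^(2*?k) * ((real ?q)^3 - real ?q + 1)^m < real ?q * (real ?q - 1) * ((real ?q)^4)^m"
      unfolding m_def L_def by (rule lines_real) (use q3 in simp)
    have qle: "?q \<le> ?q^3" using q3 by (simp add: power3_eq_cube)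
    have ineq: "?q^(2*?k) * (?q^3 + 1 - ?q)^m < ?q * (?q - 1) * (?q^4)^m"
    proof -
      have "real (?q^3 + 1 - ?q) = real (?q^3 + 1) - real ?q" by (rule of_nat_diff) (use qle in simp)
      then have "real (?q^3 + 1 - ?q) = (real ?q)^3 - real ?q + 1" by simp
      moreover have "real (?q - 1) = real ?q - 1" using q3 by (simp add: of_nat_diff)
      ultimately have "real (?q^(2*?k) * (?q^3 + 1 - ?q)^m) < real (?q * (?q - 1) * (?q^4)^m)"
        using ineqR by simp
      then show ?thesis by linarith
    qed
    have cardO: "card (UNIV :: (('a^'n) \<times> ('a^'n)) set) = ?q^(2*?k)"
      by (simp add: card_cartesian_product power_mult power2_eq_square[symmetric] mult.commute)
    have cnt: "card {\<beta>\<in>UNIV. good f g (vec.span {fst \<beta>, snd \<beta>})} * ?q^4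
        \<le> (?q^3 + 1 - ?q) * card (UNIV :: (('a^'n) \<times> ('a^'n)) set)"
      if "(f,g) \<in> PP" for f g :: "'a^'n"
    proof -
      have "card {\<beta>. good f g (vec.span {fst \<beta>, snd \<beta>})} * ?q^4 + ?q * ?q^(2*?k) \<le> (?q^3 + 1) * ?q^(2*?k)"
        by (rule cnt2[OF that])
      then have "card {\<beta>. good f g (vec.span {fst \<beta>, snd \<beta>})} * ?q^4 \<le> (?q^3 + 1) * ?q^(2*?k) - ?q * ?q^(2*?k)"
        by linarith
      also have "\<dots> = (?q^3 + 1 - ?q) * ?q^(2*?k)" by (simp add: diff_mult_distrib)
      finally show ?thesis using cardO by simp
    qed
    obtain bs where bs: "bs \<in> PiE {..<m} (\<lambda>_. UNIV)"
      "\<forall>f g. (f,g) \<in> PP \<longrightarrow> \<not>(\<forall>i<m. good f g (vec.span {fst (bs i), snd (bs i) :: 'a^'n}))"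
      using exists_good[of "UNIV :: (('a^'n) \<times> ('a^'n)) set" "\<lambda>p. vec.span {fst p, snd p}" "?q^4" "?q^3 + 1 - ?q" m,
          OF _ _ cnt ineq] by auto
    define S where "S = {P \<in> proj_points. \<exists>i<m. P \<subseteq> vec.span {fst (bs i), snd (bs i)}}"
    have sb: "strong_blocking_set S" unfolding S_def
      using sbs_from_good[of m "\<lambda>p. vec.span {fst p, snd p}" bs] bs(2) by simp
    have cS: "card S \<le> (?q + 1) * m" unfolding S_def
      by (rule card_S_le) (rule points_in_span2)
    have "real m \<le> 2 * real ?k / L" unfolding m_def using L0 by simp
    then have "real (card S) \<le> (real ?q + 1) * (2 * real ?k / L)"
      using cS by (smt (verit) of_nat_add of_nat_mono of_nat_mult mult_left_mono of_nat_0_le_iff of_nat_1)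
    then show ?thesis using sb unfolding L_def by (metis times_divide_eq_right)
  qed
qed

end
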